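(* Let $\alpha,\beta>-1$, $p>0$, and \[W(x)=(1-x)^\alpha(1+x)^\beta\,\frac14\begin{pmatrix}4+2p+2px&2(1-x)\\2(1-x)&(1-x)^2\end{pmatrix},\qquad x\in(-1,1).\] Let $B_n,C_n$ be the $2\times2$ recurrence coefficients of the monic matrix orthogonal polynomials $P_n$ for $W$, i.e. $xP_n(x)=P_{n+1}(x)+B_nP_n(x)+C_nP_{n-1}(x)$ with $P_{-1}=0$, $P_0=I_2$. Then as $n\to\infty$, $B_n=\frac{\mathcal B_2}{n^2}+O(n^{-3})$ with \[\mathcal B_2=\frac14\begin{pmatrix}(\beta+1)^2-\alpha^2&0\\0&\beta^2-(\alpha+2)^2\end{pmatrix}-\frac{\alpha+1}{1+p}\begin{pmatrix}1&2p\\ \frac12&-1\end{pmatrix},\] and $C_n=\frac14I_2+O(n^{-2})$.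
   Context: The monic matrix orthogonal polynomial $P_n$ of degree $n$ for $W$ is the unique $2\times2$ matrix polynomial $P_n(x)=x^nI_2+\dots$ with $\int_{-1}^1P_n(x)W(x)P_m(x)^\ast dx=0$ for $m\ne n$. *)

theory Defs
  imports "HOL-Analysis.Analysis" "HOL-Computational_Algebra.Polynomial" "HOL-Library.Landau_Symbols"
begin

definition mpeval :: "real poly ^2^2 \<Rightarrow> real \<Rightarrow> real^2^2" where
  "mpeval Q x = (\<chi> i j. poly (Q$i$j) x)"

definition monic_mpoly :: "nat \<Rightarrow> real poly ^2^2 \<Rightarrow> bool" where
  "monic_mpoly n Q \<longleftrightarrow> (\<forall>i j. degree (Q$i$j) \<le> n \<and> coeff (Q$i$j) n = (if i = j then 1 else 0))"

definition weightW :: "real \<Rightarrow> real \<Rightarrow> real \<Rightarrow> real \<Rightarrow> real^2^2" where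
  "weightW \<alpha> \<beta> p x = ((1 - x) powr \<alpha> * (1 + x) powr \<beta> / 4) *\<^sub>R
     vector [vector [4 + 2*p + 2*p*x, 2*(1 - x)], vector [2*(1 - x), (1 - x)^2]]"

definition is_monic_MOPS :: "(real \<Rightarrow> real^2^2) \<Rightarrow> (nat \<Rightarrow> real poly ^2^2) \<Rightarrow> bool" where
  "is_monic_MOPS W P \<longleftrightarrow> (\<forall>n. monic_mpoly n (P n)) \<and>
     (\<forall>m n. m \<noteq> n \<longrightarrow>
        ((\<lambda>x. mpeval (P n) x ** W x ** transpose (mpeval (P m) x)) has_integral 0) {-1..1})"

end

theory Submission
  imports Defs "HOL-Real_Asymp.Real_Asymp"
begin

definition om :: "real \<Rightarrow> real \<Rightarrow> real \<Rightarrow> real" where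
  "om a b x = (1 - x) powr a * (1 + x) powr b"

lemma pearson:
  fixes a b :: real and h :: "real poly"
  assumes a: "a > -1" and b: "b > -1"
  shows "((\<lambda>x. om a b x * poly ([:b-a, -(a+b+2):] * h + [:1,0,-1:] * pderiv h) x) has_integral 0) {-1..1}"
proof -
  define G where "G x = (1-x) powr (a+1) * (1+x) powr (b+1) * poly h x" for x
  have cont: "continuous_on {-1..1} G" unfolding G_def
    by (intro continuous_intros continuous_on_powr') (use a b in auto)
  have der: "(G has_vector_derivative (om a b x * poly ([:b-a, -(a+b+2):] * h + [:1,0,-1:] * pderiv h) x)) (at x)"
    if x: "x \<in> {-1<..<1}" for x
  proof -
    have x1: "1 - x > 0" "1 + x > 0" using x by auto
    have d1: "((\<lambda>x. (1-x) powr (a+1)) has_real_derivative (a+1) * (1-x) powr (a+1 - of_nat 1) * (-1)) (at x)"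
      by (rule DERIV_fun_powr) (use x1 in \<open>auto intro!: derivative_eq_intros\<close>)
    have d2: "((\<lambda>x. (1+x) powr (b+1)) has_real_derivative (b+1) * (1+x) powr (b+1 - of_nat 1) * 1) (at x)"
      by (rule DERIV_fun_powr) (use x1 in \<open>auto intro!: derivative_eq_intros\<close>)
    have d3: "((\<lambda>x. poly h x) has_real_derivative poly (pderiv h) x) (at x)"
      by (rule poly_DERIV)
    have dG: "(G has_real_derivative
        ((a+1) * (1-x) powr a * (-1)) * (1+x) powr (b+1) * poly h x
       + (1-x) powr (a+1) * ((b+1) * (1+x) powr b * 1) * poly h x
       + (1-x) powr (a+1) * (1+x) powr (b+1) * poly (pderiv h) x) (at x)"
      unfolding G_def using DERIV_mult[OF DERIV_mult[OF d1 d2] d3] by (simp add: algebra_simps)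
    have e1: "(1-x) powr (a+1) = (1-x) * (1-x) powr a" using x1 by (simp add: powr_add)
    have e2: "(1+x) powr (b+1) = (1+x) * (1+x) powr b" using x1 by (simp add: powr_add)
    have val: "((a+1) * (1-x) powr a * (-1)) * (1+x) powr (b+1) * poly h x
       + (1-x) powr (a+1) * ((b+1) * (1+x) powr b * 1) * poly h x
       + (1-x) powr (a+1) * (1+x) powr (b+1) * poly (pderiv h) x
       = om a b x * poly ([:b-a, -(a+b+2):] * h + [:1,0,-1:] * pderiv h) x"
      unfolding e1 e2 om_def by (simp add: algebra_simps)
    show ?thesis using dG val by (simp add: has_real_derivative_iff_has_vector_derivative[symmetric])
  qed
  have "((\<lambda>x. om a b x * poly ([:b-a, -(a+b+2):] * h + [:1,0,-1:] * pderiv h) x) has_integral (G 1 - G (-1))) {-1..1}"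
    by (rule fundamental_theorem_of_calculus_interior) (use cont der in auto)
  moreover have "G 1 = 0" "G (-1) = 0" unfolding G_def using a b by auto
  ultimately show ?thesis by simp
qed

definition Mp :: "real \<Rightarrow> real poly^2^2" where
  "Mp p = vector [vector [[:4+2*p, 2*p:], [:2,-2:]], vector [[:2,-2:], [:1,-2,1:]]]"
definition St :: "real poly^2^2" where
  "St = vector [vector [0, [:-2:]], vector [[:2:], 0]]"
definition F1p :: "real \<Rightarrow> real \<Rightarrow> real poly^2^2" where
  "F1p a b = vector [vector [[:b-a+1, -(a+b+3):], [:-2:]], vector [0, [:b-a-2, -(a+b+4):]]]"
definition F0p :: "real \<Rightarrow> real \<Rightarrow> real poly^2^2" where
  "F0p b q = vector [vector [[:b+1+q:], 0], vector [[:q:], 0]]"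
definition mder :: "real poly^2^2 \<Rightarrow> real poly^2^2" where
  "mder Q = (\<chi> i j. pderiv (Q$i$j))"
definition Lap :: "real poly^2^2 \<Rightarrow> real poly^2^2" where
  "Lap Q = (\<chi> i j. [:1,0,-1:] * pderiv (pderiv (Q$i$j)))"
definition Dop :: "real \<Rightarrow> real \<Rightarrow> real \<Rightarrow> real poly^2^2 \<Rightarrow> real poly^2^2" where
  "Dop a b q Q = Lap Q + mder Q ** F1p a b + Q ** F0p b q"

lemma sym_poly:
  fixes a b p q :: real
  assumes aq: "a = q*(p+1) - 1"
  shows "(Dop a b q Q ** Mp p ** transpose R - Q ** Mp p ** transpose (Dop a b q R))$i$j
    = [:b-a, -(a+b+2):] * (mder Q ** Mp p ** transpose R - Q ** Mp p ** transpose (mder R) - Q ** St ** transpose R)$i$j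
      + [:1,0,-1:] * pderiv ((mder Q ** Mp p ** transpose R - Q ** Mp p ** transpose (mder R) - Q ** St ** transpose R)$i$j)"
  apply (rule poly_eq_poly_eq_iff[THEN iffD1])
  apply (rule ext)
  apply (simp add: Dop_def Lap_def mder_def Mp_def St_def F1p_def F0p_def matrix_matrix_mult_def sum_2 transpose_def
     pderiv_add pderiv_diff pderiv_mult pderiv_pCons pderiv_smult pderiv_minus)
  apply (unfold aq; algebra)
  done

definition cmat :: "real^2^2 \<Rightarrow> real poly^2^2" where
  "cmat A = (\<chi> i j. [:A$i$j:])"
definition cm :: "real poly^2^2 \<Rightarrow> nat \<Rightarrow> real^2^2" where
  "cm Q m = (\<chi> i j. coeff (Q$i$j) m)"
definition lowdeg :: "nat \<Rightarrow> real poly^2^2 \<Rightarrow> bool" where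
  "lowdeg k R \<longleftrightarrow> (\<forall>i j m. k \<le> m \<longrightarrow> coeff (R$i$j) m = 0)"
definition Zm :: "real \<Rightarrow> real \<Rightarrow> real poly^2^2 \<Rightarrow> bool" where
  "Zm a b G \<longleftrightarrow> (\<forall>i j. ((\<lambda>x. om a b x * poly (G$i$j) x) has_integral 0) {-1..1})"

lemma mpeval_mult: "mpeval (A ** B) x = mpeval A x ** mpeval B x"
  by (simp add: mpeval_def matrix_matrix_mult_def vec_eq_iff poly_sum)
lemma mpeval_transpose: "mpeval (transpose A) x = transpose (mpeval A x)"
  by (simp add: mpeval_def transpose_def vec_eq_iff)

lemma weight_eq: "weightW a b p x = (om a b x / 4) *\<^sub>R mpeval (Mp p) x"
  by (simp add: weightW_def om_def mpeval_def Mp_def vec_eq_iff forall_2 algebra_simps power2_eq_square)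

lemma integrand_eq:
  "mpeval Q x ** weightW a b p x ** transpose (mpeval R x)
   = (om a b x / 4) *\<^sub>R mpeval (Q ** Mp p ** transpose R) x"
  unfolding weight_eq mpeval_mult mpeval_transpose
  by (simp add: matrix_scalar_ac scalar_matrix_assoc)

lemma Zm_of_hyp:
  assumes "((\<lambda>x. mpeval Q x ** weightW a b p x ** transpose (mpeval R x)) has_integral 0) {-1..1}"
  shows "Zm a b (Q ** Mp p ** transpose R)"
  unfolding Zm_def
proof (intro allI)
  fix i j :: 2
  have "((\<lambda>x. ((om a b x / 4) *\<^sub>R mpeval (Q ** Mp p ** transpose R) x) $ i $ j) has_integral (0::real^2^2) $ i $ j) {-1..1}"
    using has_integral_linear[OF assms[unfolded integrand_eq], of "\<lambda>A. A $ i $ j"]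
    by (simp add: o_def bounded_linear_vec_nth bounded_linear_compose[OF bounded_linear_vec_nth bounded_linear_vec_nth])
  hence "((\<lambda>x. om a b x / 4 * poly ((Q ** Mp p ** transpose R) $ i $ j) x) has_integral 0) {-1..1}"
    by (simp add: mpeval_def)
  from has_integral_mult_right[OF this, of 4]
  show "((\<lambda>x. om a b x * poly ((Q ** Mp p ** transpose R) $ i $ j) x) has_integral 0) {-1..1}"
    by simp
qed

lemma transpose_add': "transpose (A + B) = transpose A + transpose B"
  by (simp add: transpose_def vec_eq_iff)
lemma transpose_diff': "transpose (A - B) = transpose A - (transpose B :: 'a::ab_group_add^_^_)"
  by (simp add: transpose_def vec_eq_iff)
lemma matrix_diff_ldistrib': "(A::'a::ring_1^_^_) ** (B - C) = A ** B - A ** C"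
  by (simp add: matrix_matrix_mult_def vec_eq_iff sum_subtractf right_diff_distrib)
lemma matrix_diff_rdistrib': "((B::'a::ring_1^_^_) - C) ** A = B ** A - C ** A"
  by (simp add: matrix_matrix_mult_def vec_eq_iff sum_subtractf left_diff_distrib)
lemma matrix_add_rdistrib': "((B::'a::semiring_1^_^_) + C) ** A = B ** A + C ** A"
  by (simp add: matrix_matrix_mult_def vec_eq_iff sum.distrib distrib_right)

lemma Zm_add: "Zm a b G \<Longrightarrow> Zm a b H \<Longrightarrow> Zm a b (G + H)"
  unfolding Zm_def
proof (intro allI)
  fix i j
  assume "\<forall>i j. ((\<lambda>x. om a b x * poly (G$i$j) x) has_integral 0) {-1..1}"
    "\<forall>i j. ((\<lambda>x. om a b x * poly (H$i$j) x) has_integral 0) {-1..1}"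
  from has_integral_add[OF this[THEN spec, THEN spec]]
  show "((\<lambda>x. om a b x * poly ((G + H)$i$j) x) has_integral 0) {-1..1}"
    by (simp add: distrib_left)
qed
lemma Zm_diff: "Zm a b G \<Longrightarrow> Zm a b H \<Longrightarrow> Zm a b (G - H)"
  unfolding Zm_def
proof (intro allI)
  fix i j
  assume "\<forall>i j. ((\<lambda>x. om a b x * poly (G$i$j) x) has_integral 0) {-1..1}"
    "\<forall>i j. ((\<lambda>x. om a b x * poly (H$i$j) x) has_integral 0) {-1..1}"
  from has_integral_diff[OF this[THEN spec, THEN spec]]
  show "((\<lambda>x. om a b x * poly ((G - H)$i$j) x) has_integral 0) {-1..1}"
    by (simp add: right_diff_distrib)
qed
lemma Zm_zero: "Zm a b 0"
  unfolding Zm_def by simp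

lemma Zm_cmat_left:
  assumes "Zm a b G" shows "Zm a b (cmat A ** G)"
  unfolding Zm_def
proof (intro allI)
  fix i j :: 2
  have h: "((\<lambda>x. om a b x * poly (G$k$j) x) has_integral 0) {-1..1}" for k
    using assms Zm_def by blast
  have "((\<lambda>x. A$i$1 * (om a b x * poly (G$1$j) x) + A$i$2 * (om a b x * poly (G$2$j) x)) has_integral 0) {-1..1}"
    using has_integral_add[OF has_integral_mult_right[OF h[of 1], of "A$i$1"] has_integral_mult_right[OF h[of 2], of "A$i$2"]]
    by simp
  then show "((\<lambda>x. om a b x * poly ((cmat A ** G) $ i $ j) x) has_integral 0) {-1..1}"
    by (simp add: cmat_def matrix_matrix_mult_def sum_2 algebra_simps)
qed

lemma Zm_cmat_right:
  assumes "Zm a b G" shows "Zm a b (G ** cmat A)"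
  unfolding Zm_def
proof (intro allI)
  fix i j :: 2
  have h: "((\<lambda>x. om a b x * poly (G$i$k) x) has_integral 0) {-1..1}" for k
    using assms Zm_def by blast
  have "((\<lambda>x. A$1$j * (om a b x * poly (G$i$1) x) + A$2$j * (om a b x * poly (G$i$2) x)) has_integral 0) {-1..1}"
    using has_integral_add[OF has_integral_mult_right[OF h[of 1], of "A$1$j"] has_integral_mult_right[OF h[of 2], of "A$2$j"]]
    by simp
  then show "((\<lambda>x. om a b x * poly ((G ** cmat A) $ i $ j) x) has_integral 0) {-1..1}"
    by (simp add: cmat_def matrix_matrix_mult_def sum_2 algebra_simps)
qed

lemma lowdeg_monic: "monic_mpoly n Q \<Longrightarrow> lowdeg (Suc n) Q"
  unfolding monic_mpoly_def lowdeg_def by (metis Suc_le_eq coeff_eq_0 le_less_trans)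

lemma cm_monic: "monic_mpoly n Q \<Longrightarrow> cm Q n = mat 1"
  unfolding monic_mpoly_def cm_def mat_def by (simp add: vec_eq_iff)

lemma cm_add: "cm (A + B) m = cm A m + cm B m"
  by (simp add: cm_def vec_eq_iff)
lemma cm_diff: "cm (A - B) m = cm A m - cm B m"
  by (simp add: cm_def vec_eq_iff)
lemma cm_cmat_mult: "cm (cmat A ** Q) m = A ** cm Q m"
  by (simp add: cm_def cmat_def matrix_matrix_mult_def vec_eq_iff coeff_sum)

lemma lowdeg_cm: "lowdeg k R \<longleftrightarrow> (\<forall>m\<ge>k. cm R m = 0)"
  unfolding lowdeg_def cm_def by (auto simp: vec_eq_iff)

lemma span:
  assumes mops: "is_monic_MOPS (weightW a b p) P"
  shows "lowdeg k R \<Longrightarrow> k \<le> n \<Longrightarrow> Zm a b (P n ** Mp p ** transpose R)"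
proof (induction k arbitrary: R)
  case 0
  then have "R = 0" unfolding lowdeg_def by (auto simp: vec_eq_iff poly_eq_iff)
  then show ?case by (simp add: transpose_def Zm_zero zero_vec_def[symmetric])
next
  case (Suc k)
  define A where "A = cm R k"
  define R' where "R' = R - cmat A ** P k"
  have monk: "monic_mpoly k (P k)" using mops unfolding is_monic_MOPS_def by blast
  have "lowdeg k R'"
    unfolding lowdeg_cm
  proof (intro allI impI)
    fix m assume "k \<le> m"
    show "cm R' m = 0"
    proof (cases "m = k")
      case True
      then show ?thesis unfolding R'_def cm_diff cm_cmat_mult A_def using cm_monic[OF monk] by simp
    next
      case False
      with \<open>k \<le> m\<close> have "Suc k \<le> m" by simp
      then have "cm R m = 0" "cm (P k) m = 0"
        using Suc.prems(1) lowdeg_monic[OF monk] unfolding lowdeg_cm by auto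
      then show ?thesis unfolding R'_def cm_diff cm_cmat_mult by simp
    qed
  qed
  then have z1: "Zm a b (P n ** Mp p ** transpose R')" using Suc by simp
  have "k \<noteq> n" using Suc.prems by simp
  then have "((\<lambda>x. mpeval (P n) x ** weightW a b p x ** transpose (mpeval (P k) x)) has_integral 0) {-1..1}"
    using mops unfolding is_monic_MOPS_def by auto
  from Zm_cmat_right[OF Zm_of_hyp[OF this], of "transpose A"]
  have tr: "transpose (cmat A ** P k) = transpose (P k) ** cmat (transpose A)"
    unfolding matrix_transpose_mul by (simp add: cmat_def transpose_def vec_eq_iff)
  have z2: "Zm a b (P n ** Mp p ** transpose (cmat A ** P k))"
    unfolding tr matrix_mul_assoc by fact
  have "R = R' + cmat A ** P k" unfolding R'_def by simp
  then have "P n ** Mp p ** transpose R = P n ** Mp p ** transpose R' + P n ** Mp p ** transpose (cmat A ** P k)"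
    by (simp only: transpose_add' matrix_add_ldistrib)
  then show ?case using Zm_add[OF z1 z2] by simp
qed

definition B1m :: "real \<Rightarrow> real \<Rightarrow> real^2^2" where
  "B1m a b = vector [vector [-(a+b+3), 0], vector [0, -(a+b+4)]]"
definition B0m :: "real \<Rightarrow> real \<Rightarrow> real^2^2" where
  "B0m a b = vector [vector [b-a+1, -2], vector [0, b-a-2]]"
definition F0m :: "real \<Rightarrow> real \<Rightarrow> real^2^2" where
  "F0m b q = vector [vector [b+1+q, 0], vector [q, 0]]"
definition Gam :: "real \<Rightarrow> real \<Rightarrow> real \<Rightarrow> nat \<Rightarrow> real^2^2" where
  "Gam a b q m = (-(real m * (real m - 1))) *\<^sub>R mat 1 + real m *\<^sub>R B1m a b + F0m b q"

lemma coeff_lap: "coeff ([:1,0,-1:] * pderiv (pderiv f)) m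
   = real (Suc m) * real (Suc (Suc m)) * coeff f (Suc (Suc m)) - real m * (real m - 1) * coeff (f::real poly) m"
proof (cases m)
  case 0 then show ?thesis by (simp add: coeff_pderiv)
next
  case (Suc k) note k = this
  show ?thesis
  proof (cases k)
    case 0 then show ?thesis using k by (simp add: coeff_pderiv)
  next
    case (Suc l) then show ?thesis using k by (simp add: coeff_pderiv algebra_simps)
  qed
qed

lemma coeff_lin_der: "coeff (pderiv f * [:c0, c1:]) m
   = c0 * real (Suc m) * coeff (f::real poly) (Suc m) + c1 * real m * coeff f m"
proof (cases m)
  case 0 then show ?thesis by (simp add: coeff_pderiv mult.commute[of _ "[:c0, c1:]"])
next
  case (Suc k) then show ?thesis by (simp add: coeff_pderiv mult.commute[of _ "[:c0, c1:]"] algebra_simps)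
qed

lemma coeff_const_mult: "coeff (f * [:c:]) m = c * coeff (f::real poly) m"
  by (simp add: mult.commute[of f])

lemma cm_Dop: "cm (Dop a b q Q) m = cm Q m ** Gam a b q m + real (Suc m) *\<^sub>R (cm Q (Suc m) ** B0m a b)
   + (real (Suc m) * real (Suc (Suc m))) *\<^sub>R cm Q (Suc (Suc m))"
proof -
  have F1a: "F1p a b $ 1 $ 1 = [:b-a+1, -(a+b+3):]" "F1p a b $ 1 $ 2 = [:-2:]"
    "F1p a b $ 2 $ 1 = [:0, 0:]" "F1p a b $ 2 $ 2 = [:b-a-2, -(a+b+4):]"
    by (simp_all add: F1p_def)
  have F0a: "F0p b q $ 1 $ 1 = [:b+1+q:]" "F0p b q $ 1 $ 2 = [:0:]"
    "F0p b q $ 2 $ 1 = [:q:]" "F0p b q $ 2 $ 2 = [:0:]"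
    by (simp_all add: F0p_def)
  have e1: "coeff (pderiv f * [:-2:]) m = -2 * real (Suc m) * coeff f (Suc m)" for f :: "real poly"
    using coeff_lin_der[of f "-2" 0 m] by simp
  show ?thesis
    unfolding vec_eq_iff forall_2
    apply (simp only: cm_def vec_lambda_beta Dop_def Lap_def mder_def matrix_matrix_mult_def sum_2
        vector_add_component F1a F0a coeff_add coeff_lap coeff_lin_der coeff_const_mult e1)
    apply (simp add: cm_def Gam_def B1m_def B0m_def F0m_def mat_def matrix_matrix_mult_def sum_2 coeff_pderiv algebra_simps)
    done
qed

lemma lowdeg_Dop: "lowdeg k Q \<Longrightarrow> lowdeg k (Dop a b q Q)"
  unfolding lowdeg_cm cm_Dop by simp

lemma Dop_monic:
  assumes "monic_mpoly n Q"
  shows "lowdeg n (Dop a b q Q - cmat (Gam a b q n) ** Q)"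
  unfolding lowdeg_cm
proof (intro allI impI)
  fix m assume "n \<le> m"
  have z: "cm Q k = 0" if "Suc n \<le> k" for k
    using lowdeg_monic[OF assms] that unfolding lowdeg_cm by auto
  show "cm (Dop a b q Q - cmat (Gam a b q n) ** Q) m = 0"
  proof (cases "m = n")
    case True
    then show ?thesis unfolding cm_diff cm_Dop cm_cmat_mult using z cm_monic[OF assms] by simp
  next
    case False
    then show ?thesis unfolding cm_diff cm_Dop cm_cmat_mult using z \<open>n \<le> m\<close> by simp
  qed
qed

lemma Zm_sym:
  assumes aq: "a = q*(p+1) - 1" and a: "a > -1" and b: "b > -1"
  shows "Zm a b (Dop a b q Q ** Mp p ** transpose R - Q ** Mp p ** transpose (Dop a b q R))"
  unfolding Zm_def
proof (intro allI)
  fix i j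
  show "((\<lambda>x. om a b x * poly ((Dop a b q Q ** Mp p ** transpose R - Q ** Mp p ** transpose (Dop a b q R)) $ i $ j) x) has_integral 0) {-1..1}"
    unfolding sym_poly[OF aq] by (rule pearson[OF a b])
qed

lemma int0_imp_zero:
  fixes f :: "real \<Rightarrow> real"
  assumes cont: "continuous_on {-1<..<1} f" and nn: "\<forall>x\<in>{-1..1}. 0 \<le> f x"
    and int: "(f has_integral 0) {-1..1}" and x: "x \<in> {-1<..<1}"
  shows "f x = 0"
proof -
  define c where "c = (x - 1) / 2"
  define d where "d = (x + 1) / 2"
  have cd: "-1 < c" "c < x" "x < d" "d < 1" using x unfolding c_def d_def by auto
  have sub: "{c..d} \<subseteq> {-1..1}" using cd by auto
  have sub2: "{c..d} \<subseteq> {-1<..<1}" using cd by auto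
  have "f integrable_on {c..d}"
    using integrable_subinterval_real[OF has_integral_integrable[OF int] sub] .
  then have hi: "(f has_integral integral {c..d} f) {c..d}" by (rule integrable_integral)
  have "integral {c..d} f \<le> 0" using has_integral_subset_le[OF sub hi int] nn by auto
  moreover have "integral {c..d} f \<ge> 0" using has_integral_nonneg[OF hi] nn sub by auto
  ultimately have h0: "(f has_integral 0) (cbox c d)" using hi by simp
  have c0: "continuous_on (cbox c d) f" using continuous_on_subset[OF cont sub2] by simp
  show "f x = 0"
  proof (rule has_integral_0_cbox_imp_0[OF c0 _ h0])
    show "0 \<le> f y" if "y \<in> box c d" for y using that nn sub cd by auto
    show "box c d \<noteq> {}" using cd by auto
    show "x \<in> cbox c d" using cd by auto
  qed
qed

lemma pos_zero:
  assumes a: "a > -1" and b: "b > -1" and p: "p > 0"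
    and Z: "Zm a b (G ** Mp p ** transpose G)"
  shows "G = 0"
proof -
  have row0: "G$i$1 = 0 \<and> G$i$2 = 0" for i
  proof -
    define g where "g = (G ** Mp p ** transpose G)$i$i"
    have sos: "poly g x = (2 * poly (G$i$1) x + (1-x) * poly (G$i$2) x)^2 + 2*p*(1+x) * (poly (G$i$1) x)^2" for x
      unfolding g_def by (simp add: matrix_matrix_mult_def sum_2 transpose_def Mp_def algebra_simps power2_eq_square)
    have int: "((\<lambda>x. om a b x * poly g x) has_integral 0) {-1..1}" using Z unfolding Zm_def g_def by blast
    have cont: "continuous_on {-1<..<1} (\<lambda>x. om a b x * poly g x)"
      unfolding om_def by (intro continuous_intros) auto
    have nn: "\<forall>x\<in>{-1..1}. 0 \<le> om a b x * poly g x"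
      using p unfolding om_def sos by (auto intro!: mult_nonneg_nonneg add_nonneg_nonneg)
    have van: "poly (G$i$1) x = 0 \<and> poly (G$i$2) x = 0" if x: "x \<in> {-1<..<1}" for x
    proof -
      have "om a b x * poly g x = 0" by (rule int0_imp_zero[OF cont nn int x])
      moreover have "om a b x > 0" using x unfolding om_def by auto
      ultimately have g0: "poly g x = 0" by simp
      have t1: "0 \<le> (2 * poly (G$i$1) x + (1-x) * poly (G$i$2) x)^2" by simp
      have t2: "0 \<le> 2*p*(1+x) * (poly (G$i$1) x)^2" using x p by auto
      have "2*p*(1+x) * (poly (G$i$1) x)^2 = 0" using g0 t1 t2 unfolding sos by linarith
      then have u1: "poly (G$i$1) x = 0" using x p by auto
      have "(2 * poly (G$i$1) x + (1-x) * poly (G$i$2) x)^2 = 0" using g0 t1 t2 unfolding sos by linarith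
      then have "(1-x) * poly (G$i$2) x = 0" using u1 by simp
      then have u2: "poly (G$i$2) x = 0" using x by auto
      show ?thesis using u1 u2 by simp
    qed
    have "G$i$k = 0" if "\<forall>x\<in>{-1<..<1}. poly (G$i$k) x = 0" for k
    proof (rule ccontr)
      assume "G$i$k \<noteq> 0"
      then have "finite {x. poly (G$i$k) x = 0}" by (rule poly_roots_finite)
      moreover have "{-1<..<1::real} \<subseteq> {x. poly (G$i$k) x = 0}" using that by auto
      ultimately have "finite {-1<..<1::real}" by (rule finite_subset[rotated])
      then show False using infinite_Ioo_iff[of "-1::real" 1] by simp
    qed
    then show ?thesis using van by blast
  qed
  show ?thesis unfolding vec_eq_iff forall_2 using row0 by simp
qed

lemma eigen:
  assumes mops: "is_monic_MOPS (weightW a b p) P"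
    and aq: "a = q*(p+1) - 1" and a: "a > -1" and b: "b > -1" and p: "p > 0"
  shows "Dop a b q (P n) = cmat (Gam a b q n) ** P n"
proof -
  have mon: "monic_mpoly n (P n)" using mops unfolding is_monic_MOPS_def by blast
  define Zn where "Zn = Dop a b q (P n) - cmat (Gam a b q n) ** P n"
  have lz: "lowdeg n Zn" unfolding Zn_def by (rule Dop_monic[OF mon])
  have key: "Zm a b (Zn ** Mp p ** transpose R)" if R: "lowdeg n R" for R
  proof -
    have z1: "Zm a b (Dop a b q (P n) ** Mp p ** transpose R - P n ** Mp p ** transpose (Dop a b q R))"
      by (rule Zm_sym[OF aq a b])
    have z2: "Zm a b (P n ** Mp p ** transpose (Dop a b q R))"
      by (rule span[OF mops lowdeg_Dop[OF R]]) simp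
    have z3: "Zm a b (cmat (Gam a b q n) ** (P n ** Mp p ** transpose R))"
      by (rule Zm_cmat_left, rule span[OF mops R]) simp
    have "Zn ** Mp p ** transpose R =
       (Dop a b q (P n) ** Mp p ** transpose R - P n ** Mp p ** transpose (Dop a b q R))
       + P n ** Mp p ** transpose (Dop a b q R) - cmat (Gam a b q n) ** (P n ** Mp p ** transpose R)"
      unfolding Zn_def matrix_diff_rdistrib' matrix_mul_assoc by simp
    then show ?thesis using Zm_diff[OF Zm_add[OF z1 z2] z3] by simp
  qed
  have "Zn = 0" by (rule pos_zero[OF a b p key[OF lz]])
  then show ?thesis unfolding Zn_def by simp
qed

lemma il_identity:
  fixes c d m :: real
  assumes m: "m \<noteq> 0" and D: "c*m + d \<noteq> 0" and c: "c \<noteq> 0"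
  shows "1 / ((c*m + d) / m) - (1/c + (-d/c^2) / m + (d^2/c^3) / m ^ 2)
        = - (d^3 / (c^3 * ((c*m + d) / m))) * (1 / m ^ 3)"
proof -
  define D where "D = c*m + d"
  have D0: "D \<noteq> 0" using assms D_def by simp
  have s1: "m / D = 1/c - d/(c*D)" using D0 c by (simp add: field_simps) (simp add: D_def algebra_simps)
  have s2: "d/(c*D) = d/(c^2*m) - d^2/(c^2*m*D)" using D0 c m by (simp add: field_simps power2_eq_square) (simp add: D_def algebra_simps)
  have s3: "d^2/(c^2*m*D) = d^2/(c^3*m^2) - d^3/(c^3*m^2*D)" using D0 c m by (simp add: field_simps power2_eq_square power3_eq_cube) (simp add: D_def algebra_simps)
  have l: "1 / ((c*m + d) / m) = m / D" unfolding D_def by simp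
  have r: "- (d^3 / (c^3 * ((c*m + d) / m))) * (1 / m ^ 3) = -(d^3/(c^3*m^2*D))"
    using m unfolding D_def by (simp add: field_simps power2_eq_square power3_eq_cube)
  show ?thesis unfolding l r s1 s2 s3 by (simp add: algebra_simps)
qed

definition E3 :: "(nat \<Rightarrow> real) \<Rightarrow> real \<Rightarrow> real \<Rightarrow> real \<Rightarrow> bool" where
  "E3 f c0 c1 c2 \<longleftrightarrow> (\<lambda>n. f n - (c0 + c1 / real n + c2 / real n ^ 2)) \<in> O(\<lambda>n. 1 / real n ^ 3)"

lemma bigo_c_pow:
  assumes "k \<le> m" shows "(\<lambda>n::nat. c / real n ^ m) \<in> O(\<lambda>n. 1 / real n ^ k)"
proof (rule bigoI[of _ "\<bar>c\<bar>"])
  have "\<bar>c / real n ^ m\<bar> \<le> \<bar>c\<bar> * \<bar>1 / real n ^ k\<bar>" if "n \<ge> 1" for n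
  proof -
    have npos: "real n > 0" using that by simp
    have km: "real n ^ k \<le> real n ^ m" using that assms by (intro power_increasing) auto
    have pk: "real n ^ k > 0" using npos by simp
    have le: "1 / real n ^ m \<le> 1 / real n ^ k" by (rule frac_le) (use pk km in auto)
    have "\<bar>c / real n ^ m\<bar> = \<bar>c\<bar> * (1 / real n ^ m)" using npos by (simp add: abs_divide)
    also have "\<dots> \<le> \<bar>c\<bar> * (1 / real n ^ k)" using le by (rule mult_left_mono) simp
    also have "\<dots> = \<bar>c\<bar> * \<bar>1 / real n ^ k\<bar>" using npos by simp
    finally show ?thesis .
  qed
  then show "\<forall>\<^sub>F n in sequentially. norm (c / real n ^ m) \<le> \<bar>c\<bar> * norm (1 / real n ^ k)"
    unfolding eventually_sequentially real_norm_def by blast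
qed

lemma bigo_c_pow1: "(\<lambda>n::nat. c / real n ^ m) \<in> O(\<lambda>n. 1)"
  using bigo_c_pow[of 0 m c] by simp

lemma T3_bounded: "(\<lambda>n::nat. c0 + c1 / real n + c2 / real n ^ 2) \<in> O(\<lambda>n. 1)"
proof -
  have "(\<lambda>n::nat. c0) \<in> O(\<lambda>n. 1)" by simp
  moreover have "(\<lambda>n::nat. c1 / real n) \<in> O(\<lambda>n. 1)" using bigo_c_pow1[of c1 1] by simp
  moreover have "(\<lambda>n::nat. c2 / real n ^ 2) \<in> O(\<lambda>n. 1)" using bigo_c_pow1[of c2 2] by simp
  ultimately show ?thesis by (intro sum_in_bigo)
qed

lemma E3_bounded: assumes "E3 f c0 c1 c2" shows "f \<in> O(\<lambda>n. 1)"
proof -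
  have "(\<lambda>n. f n - (c0 + c1 / real n + c2 / real n ^ 2)) \<in> O(\<lambda>n. 1)"
    using landau_o.big_trans[OF assms[unfolded E3_def] bigo_c_pow1[of 1 3]] .
  from sum_in_bigo(1)[OF this T3_bounded[of c0 c1 c2]] show ?thesis by simp
qed

lemma E3_const: "E3 (\<lambda>n. c) c 0 0"
  unfolding E3_def by simp
lemma E3_u: "E3 (\<lambda>n. 1 / real n) 0 1 0"
  unfolding E3_def by simp

lemma E3_add: assumes "E3 f a0 a1 a2" "E3 g b0 b1 b2"
  shows "E3 (\<lambda>n. f n + g n) (a0+b0) (a1+b1) (a2+b2)"
  using sum_in_bigo(1)[OF assms[unfolded E3_def]] unfolding E3_def by (simp add: algebra_simps add_divide_distrib)
lemma E3_diff: assumes "E3 f a0 a1 a2" "E3 g b0 b1 b2"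
  shows "E3 (\<lambda>n. f n - g n) (a0-b0) (a1-b1) (a2-b2)"
  using sum_in_bigo(2)[OF assms[unfolded E3_def]] unfolding E3_def by (simp add: algebra_simps diff_divide_distrib)
lemma E3_neg: assumes "E3 f a0 a1 a2"
  shows "E3 (\<lambda>n. - f n) (-a0) (-a1) (-a2)"
proof -
  have eq: "(\<lambda>n. - f n - (-a0 + -a1 / real n + -a2 / real n ^ 2)) = (\<lambda>n. - (f n - (a0 + a1 / real n + a2 / real n ^ 2)))"
    by (rule ext) simp
  show ?thesis unfolding E3_def eq landau_o.big.uminus_in_iff using assms unfolding E3_def .
qed

lemma mult_id:
  fixes u x y a0 a1 a2 b0 b1 b2 :: real
  shows "(x - (a0 + a1*u + a2*u^2)) * (y - (b0 + b1*u + b2*u^2)) + (x - (a0 + a1*u + a2*u^2)) * (b0 + b1*u + b2*u^2)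
     + (a0 + a1*u + a2*u^2) * (y - (b0 + b1*u + b2*u^2)) + ((a1*b2 + a2*b1) * u^3 + (a2*b2) * u^4)
     = x * y - (a0*b0 + (a0*b1+a1*b0) * u + (a0*b2+a1*b1+a2*b0) * u^2)"
  by (simp add: algebra_simps power2_eq_square power3_eq_cube power4_eq_xxxx)

lemma E3_mult: assumes f: "E3 f a0 a1 a2" and g: "E3 g b0 b1 b2"
  shows "E3 (\<lambda>n. f n * g n) (a0*b0) (a0*b1+a1*b0) (a0*b2+a1*b1+a2*b0)"
proof -
  define F where "F n = a0 + a1 / real n + a2 / real n ^ 2" for n
  define G where "G n = b0 + b1 / real n + b2 / real n ^ 2" for n
  have ef: "(\<lambda>n. f n - F n) \<in> O(\<lambda>n. 1 / real n ^ 3)" using f unfolding E3_def F_def .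
  have eg: "(\<lambda>n. g n - G n) \<in> O(\<lambda>n. 1 / real n ^ 3)" using g unfolding E3_def G_def .
  have Fb: "F \<in> O(\<lambda>n. 1)" unfolding F_def by (rule T3_bounded)
  have Gb: "G \<in> O(\<lambda>n. 1)" unfolding G_def by (rule T3_bounded)
  have egb: "(\<lambda>n. g n - G n) \<in> O(\<lambda>n. 1)" using landau_o.big_trans[OF eg bigo_c_pow1[of 1 3]] .
  have t1: "(\<lambda>n. (f n - F n) * (g n - G n)) \<in> O(\<lambda>n. 1 / real n ^ 3)"
    using landau_o.big.mult[OF ef egb] by simp
  have t2: "(\<lambda>n. (f n - F n) * G n) \<in> O(\<lambda>n. 1 / real n ^ 3)"
    using landau_o.big.mult[OF ef Gb] by simp
  have t3: "(\<lambda>n. F n * (g n - G n)) \<in> O(\<lambda>n. 1 / real n ^ 3)"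
    using landau_o.big.mult[OF Fb eg] by simp
  have t4: "(\<lambda>n. (a1*b2 + a2*b1) / real n ^ 3 + (a2*b2) / real n ^ 4) \<in> O(\<lambda>n. 1 / real n ^ 3)"
    by (intro sum_in_bigo bigo_c_pow) auto
  have big: "(\<lambda>n. (f n - F n) * (g n - G n) + (f n - F n) * G n + F n * (g n - G n)
      + ((a1*b2 + a2*b1) / real n ^ 3 + (a2*b2) / real n ^ 4)) \<in> O(\<lambda>n. 1 / real n ^ 3)"
    by (rule sum_in_bigo(1)[OF sum_in_bigo(1)[OF sum_in_bigo(1)[OF t1 t2] t3] t4])
  have ev: "eventually (\<lambda>n. (f n - F n) * (g n - G n) + (f n - F n) * G n + F n * (g n - G n)
      + ((a1*b2 + a2*b1) / real n ^ 3 + (a2*b2) / real n ^ 4)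
      = f n * g n - (a0*b0 + (a0*b1+a1*b0) / real n + (a0*b2+a1*b1+a2*b0) / real n ^ 2)) sequentially"
  proof (rule always_eventually, rule allI)
    fix n
    show "(f n - F n) * (g n - G n) + (f n - F n) * G n + F n * (g n - G n)
      + ((a1*b2 + a2*b1) / real n ^ 3 + (a2*b2) / real n ^ 4)
      = f n * g n - (a0*b0 + (a0*b1+a1*b0) / real n + (a0*b2+a1*b1+a2*b0) / real n ^ 2)"
      using mult_id[of "f n" a0 a1 "1/real n" a2 "g n" b0 b1 b2] unfolding F_def G_def
      by (simp only: power_one_over mult_1_right times_divide_eq_right)
  qed
  show ?thesis unfolding E3_def using landau_o.big.in_cong[OF ev] big by (rule iffD1)
qed

lemma E3_cmult: assumes "E3 f a0 a1 a2" shows "E3 (\<lambda>n. c * f n) (c*a0) (c*a1) (c*a2)"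
  using E3_mult[OF E3_const assms] by simp

lemma E3_il: assumes c: "c \<noteq> 0"
  shows "E3 (\<lambda>n. 1 / (c + d / real n)) (1/c) (-d/c^2) (d^2/c^3)"
  unfolding E3_def
proof (rule bigoI[of _ "2 * \<bar>d\<bar>^3 / \<bar>c\<bar>^4"])
  have key: "\<bar>1 / (c + d / real n) - (1/c + (-d/c^2) / real n + (d^2/c^3) / real n ^ 2)\<bar>
        \<le> 2 * \<bar>d\<bar>^3 / \<bar>c\<bar>^4 * \<bar>1 / real n ^ 3\<bar>"
    if n: "real n \<ge> 2 * \<bar>d\<bar> / \<bar>c\<bar> + 1" for n
  proof -
    have npos: "real n > 0" using n c by (smt (verit, best) divide_nonneg_nonneg abs_ge_zero)
    have "\<bar>d / real n\<bar> \<le> \<bar>c\<bar> / 2"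
    proof -
      have "2 * \<bar>d\<bar> / \<bar>c\<bar> \<le> real n" using n by linarith
      then have "2 * \<bar>d\<bar> \<le> real n * \<bar>c\<bar>" using c by (simp add: divide_le_eq)
      then show ?thesis using npos by (simp add: abs_divide divide_le_eq mult.commute)
    qed
    then have den: "\<bar>c + d / real n\<bar> \<ge> \<bar>c\<bar> / 2" by linarith
    then have den0: "c + d / real n \<noteq> 0" using c by auto
    define m where "m = real n"
    have m0: "m \<noteq> 0" using npos m_def by simp
    have w: "c + d / m = (c*m + d) / m" using m0 by (simp add: field_simps)
    have w0: "c*m + d \<noteq> 0" using den0 w m_def by auto
    have eq0: "1 / (c + d / m) - (1/c + (-d/c^2) / m + (d^2/c^3) / m ^ 2)
        = - (d^3 / (c^3 * (c + d / m))) * (1 / m ^ 3)"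
      unfolding w by (rule il_identity[OF m0 w0 c])
    have eq: "1 / (c + d / real n) - (1/c + (-d/c^2) / real n + (d^2/c^3) / real n ^ 2)
        = - (d^3 / (c^3 * (c + d / real n))) * (1 / real n ^ 3)"
      using eq0 unfolding m_def .
    have "\<bar>d^3 / (c^3 * (c + d / real n))\<bar> \<le> 2 * \<bar>d\<bar>^3 / \<bar>c\<bar>^4"
    proof -
      have "\<bar>d^3 / (c^3 * (c + d / real n))\<bar> = \<bar>d\<bar>^3 / (\<bar>c\<bar>^3 * \<bar>c + d / real n\<bar>)"
        by (simp add: abs_divide abs_mult power_abs)
      also have "\<dots> \<le> \<bar>d\<bar>^3 / (\<bar>c\<bar>^3 * (\<bar>c\<bar> / 2))"
        using den c by (intro divide_left_mono mult_left_mono mult_pos_pos) auto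
      also have "\<dots> = 2 * \<bar>d\<bar>^3 / \<bar>c\<bar>^4" using c by (simp add: field_simps power4_eq_xxxx power3_eq_cube)
      finally show ?thesis .
    qed
    then show ?thesis unfolding eq abs_mult abs_minus_cancel
      by (intro mult_right_mono) auto
  qed
  show "\<forall>\<^sub>F n in sequentially. norm (1 / (c + d / real n) - (1/c + (-d/c^2) / real n + (d^2/c^3) / real n ^ 2))
        \<le> 2 * \<bar>d\<bar>^3 / \<bar>c\<bar>^4 * norm (1 / real n ^ 3)"
    unfolding eventually_sequentially real_norm_def
  proof (rule exI[of _ "nat \<lceil>2 * \<bar>d\<bar> / \<bar>c\<bar> + 1\<rceil>"], intro allI impI)
    fix n assume "nat \<lceil>2 * \<bar>d\<bar> / \<bar>c\<bar> + 1\<rceil> \<le> n"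
    then have "real (nat \<lceil>2 * \<bar>d\<bar> / \<bar>c\<bar> + 1\<rceil>) \<le> real n" by (rule of_nat_mono)
    moreover have "2 * \<bar>d\<bar> / \<bar>c\<bar> + 1 \<le> real (nat \<lceil>2 * \<bar>d\<bar> / \<bar>c\<bar> + 1\<rceil>)" by (rule real_nat_ceiling_ge)
    ultimately show "\<bar>1 / (c + d / real n) - (1/c + (-d/c^2) / real n + (d^2/c^3) / real n ^ 2)\<bar>
        \<le> 2 * \<bar>d\<bar>^3 / \<bar>c\<bar>^4 * \<bar>1 / real n ^ 3\<bar>" by (intro key) linarith
  qed
qed

lemma E3_conv: assumes "E3 f c0 c1 c2" "c0 = d0" "c1 = d1" "eventually (\<lambda>n. f n = g n) sequentially"
  shows "E3 g d0 d1 c2"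
proof -
  have "eventually (\<lambda>n. f n - (c0 + c1 / real n + c2 / real n ^ 2) = g n - (d0 + d1 / real n + c2 / real n ^ 2)) sequentially"
    using assms(4) by eventually_elim (simp add: assms(2,3))
  from landau_o.big.in_cong[OF this] show ?thesis using assms(1) unfolding E3_def by (rule iffD1)
qed

lemma shift3: assumes "e \<in> O(\<lambda>n. 1 / real n ^ k)" shows "(\<lambda>n. e (Suc n)) \<in> O(\<lambda>n. 1 / real n ^ k)"
proof -
  have "(\<lambda>n. e (Suc n)) \<in> O(\<lambda>n. 1 / real (Suc n) ^ k)"
    using landau_o.big.compose[OF assms filterlim_Suc] .
  moreover have "(\<lambda>n. 1 / real (Suc n) ^ k) \<in> O(\<lambda>n. 1 / real n ^ k)"
  proof (rule landau_o.big_mono)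
    show "\<forall>\<^sub>F x in sequentially. norm (1 / real (Suc x) ^ k) \<le> norm (1 / real x ^ k)"
      unfolding eventually_sequentially
      by (rule exI[of _ 1]) (auto intro!: divide_left_mono power_mono)
  qed
  ultimately show ?thesis by (rule landau_o.big_trans)
qed

lemma aux_d1: "(\<lambda>n::nat. 1 / real n - 1 / real (Suc n) - 1 / real n ^ 2) \<in> O(\<lambda>n. 1 / real n ^ 3)"
  by real_asymp
lemma aux_d2: "(\<lambda>n::nat. 1 / real n ^ 2 - 1 / real (Suc n) ^ 2) \<in> O(\<lambda>n. 1 / real n ^ 3)"
  by real_asymp
lemma aux_d3: "(\<lambda>n::nat. 1 / real n - 1 / real (Suc n)) \<in> O(\<lambda>n. 1 / real n ^ 2)"
  by real_asymp

lemma E3_diff_shift: assumes "E3 f c0 c1 c2"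
  shows "(\<lambda>n. f n - f (Suc n) - c1 / real n ^ 2) \<in> O(\<lambda>n. 1 / real n ^ 3)"
proof -
  define e where "e n = f n - (c0 + c1 / real n + c2 / real n ^ 2)" for n
  have e: "e \<in> O(\<lambda>n. 1 / real n ^ 3)" using assms unfolding E3_def e_def .
  have "(\<lambda>n. e n - e (Suc n) + c1 * (1 / real n - 1 / real (Suc n) - 1 / real n ^ 2)
        + c2 * (1 / real n ^ 2 - 1 / real (Suc n) ^ 2)) \<in> O(\<lambda>n. 1 / real n ^ 3)"
  proof -
    have s: "(\<lambda>n. e (Suc n)) \<in> O(\<lambda>n. 1 / real n ^ 3)" by (rule shift3[OF e])
    have c1: "(\<lambda>n. c1 * (1 / real n - 1 / real (Suc n) - 1 / real n ^ 2)) \<in> O(\<lambda>n. 1 / real n ^ 3)" using aux_d1 by simp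
    have c2: "(\<lambda>n. c2 * (1 / real n ^ 2 - 1 / real (Suc n) ^ 2)) \<in> O(\<lambda>n. 1 / real n ^ 3)" using aux_d2 by simp
    show ?thesis by (rule sum_in_bigo(1)[OF sum_in_bigo(1)[OF sum_in_bigo(2)[OF e s] c1] c2])
  qed
  moreover have "(\<lambda>n. e n - e (Suc n) + c1 * (1 / real n - 1 / real (Suc n) - 1 / real n ^ 2)
        + c2 * (1 / real n ^ 2 - 1 / real (Suc n) ^ 2)) = (\<lambda>n. f n - f (Suc n) - c1 / real n ^ 2)"
    by (rule ext) (simp add: e_def algebra_simps)
  ultimately show ?thesis by simp
qed

lemma E3_lin_shift: assumes "E3 f c0 c1 c2"
  shows "(\<lambda>n. real n * f n - real (Suc n) * f (Suc n) + c0) \<in> O(\<lambda>n. 1 / real n ^ 2)"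
proof -
  define e where "e n = f n - (c0 + c1 / real n + c2 / real n ^ 2)" for n
  have e: "e \<in> O(\<lambda>n. 1 / real n ^ 3)" using assms unfolding E3_def e_def .
  have ne: "(\<lambda>n. real n * e n) \<in> O(\<lambda>n. 1 / real n ^ 2)"
  proof -
    have "(\<lambda>n. real n * e n) \<in> O(\<lambda>n. real n * (1 / real n ^ 3))"
      using landau_o.big.mult_left[OF e] .
    moreover have "(\<lambda>n. real n * (1 / real n ^ 3)) \<in> O(\<lambda>n. 1 / real n ^ 2)"
      by real_asymp
    ultimately show ?thesis by (rule landau_o.big_trans)
  qed
  have big: "(\<lambda>n. real n * e n - real (Suc n) * e (Suc n) + c2 * (1 / real n - 1 / real (Suc n))) \<in> O(\<lambda>n. 1 / real n ^ 2)"
  proof -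
    have s: "(\<lambda>n. real (Suc n) * e (Suc n)) \<in> O(\<lambda>n. 1 / real n ^ 2)" using shift3[OF ne] by simp
    have c: "(\<lambda>n. c2 * (1 / real n - 1 / real (Suc n))) \<in> O(\<lambda>n. 1 / real n ^ 2)" using aux_d3 by simp
    show ?thesis by (rule sum_in_bigo(1)[OF sum_in_bigo(2)[OF ne s] c])
  qed
  have l1: "real m * e m = real m * f m - c0 * real m - c1 - c2 / real m" if "m > 0" for m
    using that by (simp add: e_def field_simps power2_eq_square)
  have ev: "eventually (\<lambda>n. real n * e n - real (Suc n) * e (Suc n) + c2 * (1 / real n - 1 / real (Suc n))
      = real n * f n - real (Suc n) * f (Suc n) + c0) sequentially"
    unfolding eventually_sequentially
  proof (rule exI[of _ 1], intro allI impI)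
    fix n :: nat assume "n \<ge> 1"
    then show "real n * e n - real (Suc n) * e (Suc n) + c2 * (1 / real n - 1 / real (Suc n))
      = real n * f n - real (Suc n) * f (Suc n) + c0"
      using l1[of n] l1[of "Suc n"] \<open>n \<ge> 1\<close> by (simp add: algebra_simps)
  qed
  from landau_o.big.in_cong[OF ev] show ?thesis using big by (rule iffD1)
qed

definition gg1 :: "real \<Rightarrow> real \<Rightarrow> real \<Rightarrow> real \<Rightarrow> real" where
  "gg1 a b q u = -u*(u-1) - u*(a+b+3) + b+1+q"
definition gg2 :: "real \<Rightarrow> real \<Rightarrow> real \<Rightarrow> real" where
  "gg2 a b u = -u*(u-1) - u*(a+b+4)"

lemma Gam_entries:
  "Gam a b q m $ 1 $ 1 = gg1 a b q (real m)" "Gam a b q m $ 1 $ 2 = 0"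
  "Gam a b q m $ 2 $ 1 = q" "Gam a b q m $ 2 $ 2 = gg2 a b (real m)"
  by (simp_all add: Gam_def gg1_def gg2_def B1m_def F0m_def mat_def algebra_simps)

lemma B0_entries:
  "B0m a b $ 1 $ 1 = b-a+1" "B0m a b $ 1 $ 2 = -2" "B0m a b $ 2 $ 1 = 0" "B0m a b $ 2 $ 2 = b-a-2"
  by (simp_all add: B0m_def)

lemma mat_entries: "(mat 1 :: real^2^2) $ 1 $ 1 = 1" "(mat 1 :: real^2^2) $ 1 $ 2 = 0" "(mat 1 :: real^2^2) $ 2 $ 1 = 0" "(mat 1 :: real^2^2) $ 2 $ 2 = 1"
  by (simp_all add: mat_def)

lemma Xeqs:
  assumes eig: "Dop a b q Q = cmat (Gam a b q n) ** Q" and mon: "monic_mpoly n Q" and n: "n \<ge> 1"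
  defines "x \<equiv> cm Q (n-1)" and "t \<equiv> real n"
  shows "x$1$2 * gg2 a b (t-1) - 2*t = gg1 a b q t * x$1$2"
    "x$1$1 * gg1 a b q (t-1) + x$1$2 * q + t*(b-a+1) = gg1 a b q t * x$1$1"
    "x$2$2 * gg2 a b (t-1) + t*(b-a-2) = q * x$1$2 + gg2 a b t * x$2$2"
    "x$2$1 * gg1 a b q (t-1) + x$2$2 * q = q * x$1$1 + gg2 a b t * x$2$1"
proof -
  obtain k where nk: "n = Suc k" using n by (cases n) auto
  have z: "cm Q (Suc n) = 0" using lowdeg_monic[OF mon] unfolding lowdeg_cm by auto
  have "cm (Dop a b q Q) k = cm (cmat (Gam a b q n) ** Q) k" using eig by simp
  then have E: "x ** Gam a b q k + real n *\<^sub>R (mat 1 ** B0m a b) = Gam a b q n ** x"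
    unfolding cm_Dop cm_cmat_mult x_def using z cm_monic[OF mon] unfolding nk by simp
  have rn: "real k = t - 1" unfolding t_def nk by simp
  note E' = E[unfolded vec_eq_iff forall_2, simplified matrix_matrix_mult_def sum_2, simplified]
  show "x$1$2 * gg2 a b (t-1) - 2*t = gg1 a b q t * x$1$2"
    using E' unfolding t_def by (simp add: Gam_entries B0_entries mat_entries rn[unfolded t_def])
  show "x$1$1 * gg1 a b q (t-1) + x$1$2 * q + t*(b-a+1) = gg1 a b q t * x$1$1"
    using E' unfolding t_def by (simp add: Gam_entries B0_entries mat_entries rn[unfolded t_def])
  show "x$2$2 * gg2 a b (t-1) + t*(b-a-2) = q * x$1$2 + gg2 a b t * x$2$2"
    using E' unfolding t_def by (simp add: Gam_entries B0_entries mat_entries rn[unfolded t_def])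
  show "x$2$1 * gg1 a b q (t-1) + x$2$2 * q = q * x$1$1 + gg2 a b t * x$2$1"
    using E' unfolding t_def by (simp add: Gam_entries B0_entries mat_entries rn[unfolded t_def])
qed

lemma Yeqs:
  assumes eig: "Dop a b q Q = cmat (Gam a b q n) ** Q" and mon: "monic_mpoly n Q" and n: "n \<ge> 2"
  defines "x \<equiv> cm Q (n-1)" and "y \<equiv> cm Q (n-2)" and "t \<equiv> real n"
  shows "y$1$2 * gg2 a b (t-2) + (t-1)*(-2*x$1$1 + x$1$2*(b-a-2)) = gg1 a b q t * y$1$2"
    "y$1$1 * gg1 a b q (t-2) + y$1$2*q + (t-1)*(x$1$1*(b-a+1)) + t*(t-1) = gg1 a b q t * y$1$1"
    "y$2$2 * gg2 a b (t-2) + (t-1)*(-2*x$2$1 + x$2$2*(b-a-2)) + t*(t-1) = q*y$1$2 + gg2 a b t * y$2$2"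
    "y$2$1 * gg1 a b q (t-2) + y$2$2*q + (t-1)*(x$2$1*(b-a+1)) = q*y$1$1 + gg2 a b t * y$2$1"
proof -
  obtain k where nk: "n = Suc (Suc k)" using n by (cases n; cases "n - 1") auto
  have "cm (Dop a b q Q) k = cm (cmat (Gam a b q n) ** Q) k" using eig by simp
  then have E: "y ** Gam a b q k + real (Suc k) *\<^sub>R (x ** B0m a b) + (real (Suc k) * real n) *\<^sub>R mat 1 = Gam a b q n ** y"
    unfolding cm_Dop cm_cmat_mult x_def y_def using cm_monic[OF mon] unfolding nk by simp
  have rn: "real (Suc k) = t - 1" "real k = t - 2" unfolding t_def nk by simp_all
  note E' = E[unfolded vec_eq_iff forall_2, simplified matrix_matrix_mult_def sum_2, simplified]
  show "y$1$2 * gg2 a b (t-2) + (t-1)*(-2*x$1$1 + x$1$2*(b-a-2)) = gg1 a b q t * y$1$2"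
    using E' unfolding t_def by (simp add: Gam_entries B0_entries mat_entries rn[unfolded t_def] algebra_simps)
  show "y$1$1 * gg1 a b q (t-2) + y$1$2*q + (t-1)*(x$1$1*(b-a+1)) + t*(t-1) = gg1 a b q t * y$1$1"
    using E' unfolding t_def by (simp add: Gam_entries B0_entries mat_entries rn[unfolded t_def] algebra_simps)
  show "y$2$2 * gg2 a b (t-2) + (t-1)*(-2*x$2$1 + x$2$2*(b-a-2)) + t*(t-1) = q*y$1$2 + gg2 a b t * y$2$2"
    using E' unfolding t_def by (simp add: Gam_entries B0_entries mat_entries rn[unfolded t_def] algebra_simps)
  show "y$2$1 * gg1 a b q (t-2) + y$2$2*q + (t-1)*(x$2$1*(b-a+1)) = q*y$1$1 + gg2 a b t * y$2$1"
    using E' unfolding t_def by (simp add: Gam_entries B0_entries mat_entries rn[unfolded t_def] algebra_simps)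
qed

definition il :: "real \<Rightarrow> real \<Rightarrow> nat \<Rightarrow> real" where "il c d n = 1 / (c + d / real n)"

definition XBf :: "real \<Rightarrow> real \<Rightarrow> nat \<Rightarrow> real" where
  "XBf a q n = 2 * il 1 (a+1-q) n"
definition XAf :: "real \<Rightarrow> real \<Rightarrow> real \<Rightarrow> nat \<Rightarrow> real" where
  "XAf a b q n = -((b-a+1) + q * XBf a q n * (1 / real n)) * il 2 (a+b+1) n"
definition XDf :: "real \<Rightarrow> real \<Rightarrow> real \<Rightarrow> nat \<Rightarrow> real" where
  "XDf a b q n = (q * XBf a q n * (1 / real n) - (b-a-2)) * il 2 (a+b+2) n"
definition XCf :: "real \<Rightarrow> real \<Rightarrow> real \<Rightarrow> nat \<Rightarrow> real" where
  "XCf a b q n = q * (XAf a b q n - XDf a b q n) * (1 / real n) * il 3 (a+2*b+2+q) n"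
definition Y12f :: "real \<Rightarrow> real \<Rightarrow> real \<Rightarrow> nat \<Rightarrow> real" where
  "Y12f a b q n = -((1 - 1 / real n) * (-2 * XAf a b q n + (b-a-2) * XBf a q n)) * il 3 (2*a+b+1-q) n"
definition Y11b :: "real \<Rightarrow> real \<Rightarrow> real \<Rightarrow> nat \<Rightarrow> real" where
  "Y11b a b q n = -((1 - 1 / real n) * ((b-a+1) * XAf a b q n * (1 / real n) + 1)
     + q * Y12f a b q n * (1 / real n) * (1 / real n)) * il 4 (2*(a+b)) n"
definition Y22b :: "real \<Rightarrow> real \<Rightarrow> real \<Rightarrow> nat \<Rightarrow> real" where
  "Y22b a b q n = (q * Y12f a b q n * (1 / real n) * (1 / real n)
     - (1 - 1 / real n) * ((-2 * XCf a b q n + (b-a-2) * XDf a b q n) * (1 / real n) + 1)) * il 4 (2*(a+b)+2) n"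
definition Y21b :: "real \<Rightarrow> real \<Rightarrow> real \<Rightarrow> nat \<Rightarrow> real" where
  "Y21b a b q n = (q * (Y11b a b q n - Y22b a b q n) * (1 / real n)
     - (1 - 1 / real n) * (b-a+1) * XCf a b q n * (1 / real n)) * il 5 (2*(a+b)+b+1+q) n"

lemma il_eq: "real n > 0 \<Longrightarrow> c * real n + d \<noteq> 0 \<Longrightarrow> il c d n = real n / (c * real n + d)"
  unfolding il_def by (simp add: field_simps)

lemma hA: fixes t A B D :: real assumes "t \<noteq> 0" "D \<noteq> 0"
  shows "-(A + B*(1/t)) * (t/D) = -(t*A + B)/D"
  using assms by (simp add: field_simps)
lemma hD: fixes t A B D :: real assumes "t \<noteq> 0" "D \<noteq> 0"
  shows "(B*(1/t) - A) * (t/D) = (B - t*A)/D"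
  using assms by (simp add: field_simps)
lemma hC: fixes t B D :: real assumes "t \<noteq> 0" "D \<noteq> 0"
  shows "B*(1/t) * (t/D) = B/D"
  using assms by (simp add: field_simps)

lemma solveX:
  fixes a b q x11 x12 x21 x22 :: real and n :: nat
  assumes a: "a > -1" and b: "b > -1" and q: "q > 0" "q < a + 1" and n: "n \<ge> 1"
  defines "t \<equiv> real n"
  assumes e12: "x12 * gg2 a b (t-1) - 2*t = gg1 a b q t * x12"
    and e11: "x11 * gg1 a b q (t-1) + x12 * q + t*(b-a+1) = gg1 a b q t * x11"
    and e22: "x22 * gg2 a b (t-1) + t*(b-a-2) = q * x12 + gg2 a b t * x22"
    and e21: "x21 * gg1 a b q (t-1) + x22 * q = q * x11 + gg2 a b t * x21"
  shows "x12 = XBf a q n" "x11 = XAf a b q n" "x22 = XDf a b q n" "x21 = XCf a b q n"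
proof -
  have t: "t \<ge> 1" using n unfolding t_def by simp
  have l12: "x12 * (t + (a+1-q)) = 2*t" using e12 unfolding gg1_def gg2_def by (simp add: algebra_simps)
  have d1: "t + (a+1-q) > 0" using t q by simp
  have s12: "x12 = 2*t / (t + (a+1-q))" using l12 d1 by (simp add: field_simps)
  show x12: "x12 = XBf a q n" unfolding s12 XBf_def using d1 t by (subst il_eq) (auto simp: t_def)
  have l11: "x11 * (2*t + (a+b+1)) = -(t*(b-a+1) + q*x12)" using e11 unfolding gg1_def by (simp add: algebra_simps)
  have d2: "2*t + (a+b+1) > 0" using t a b by simp
  have s11: "x11 = -(t*(b-a+1) + q*x12) / (2*t + (a+b+1))" using l11 d2 by (simp add: field_simps)
  have il2: "il 2 (a+b+1) n = t / (2*t + (a+b+1))" using il_eq[of n 2 "a+b+1"] t d2 unfolding t_def by simp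
  show x11: "x11 = XAf a b q n" unfolding XAf_def x12[symmetric] s11 il2 t_def[symmetric]
    using hA[of t "2*t + (a+b+1)" "b-a+1" "q*x12"] d2 t by (simp add: mult.assoc)
  have l22: "x22 * (2*t + (a+b+2)) = q*x12 - t*(b-a-2)" using e22 unfolding gg2_def by (simp add: algebra_simps)
  have d3: "2*t + (a+b+2) > 0" using t a b by simp
  have s22: "x22 = (q*x12 - t*(b-a-2)) / (2*t + (a+b+2))" using l22 d3 by (simp add: field_simps)
  have il3: "il 2 (a+b+2) n = t / (2*t + (a+b+2))" using il_eq[of n 2 "a+b+2"] t d3 unfolding t_def by simp
  show x22: "x22 = XDf a b q n" unfolding XDf_def x12[symmetric] s22 il3 t_def[symmetric]
    using hD[of t "2*t + (a+b+2)" "q*x12" "b-a-2"] d3 t by (simp add: mult.assoc)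
  have l21: "x21 * (3*t + (a+2*b+2+q)) = q*(x11 - x22)" using e21 unfolding gg1_def gg2_def by (simp add: algebra_simps)
  have d4: "3*t + (a+2*b+2+q) > 0" using t a b q by simp
  have s21: "x21 = q*(x11 - x22) / (3*t + (a+2*b+2+q))" using l21 d4 by (simp add: field_simps)
  have il4: "il 3 (a+2*b+2+q) n = t / (3*t + (a+2*b+2+q))" using il_eq[of n 3 "a+2*b+2+q"] t d4 unfolding t_def by simp
  show "x21 = XCf a b q n" unfolding XCf_def x11[symmetric] x22[symmetric] s21 il4 t_def[symmetric]
    using hC[of t "3*t + (a+2*b+2+q)" "q*(x11 - x22)"] d4 t by (simp add: mult.assoc)
qed

lemma hY12: fixes t W D :: real assumes "t \<noteq> 0" "D \<noteq> 0"
  shows "-((1 - 1/t)*W) * (t/D) = -((t-1)*W)/D"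
  using assms by (simp add: field_simps)
lemma hY11: fixes t K X Q Y D :: real assumes "t \<noteq> 0" "D \<noteq> 0"
  shows "t * (-((1 - 1/t)*(K*X*(1/t) + 1) + Q*Y*(1/t)*(1/t)) * (t/D)) = -(Q*Y + (t-1)*(X*K) + t*(t-1))/D"
  using assms by (simp add: field_simps)
lemma hY22: fixes t W Q Y D :: real assumes "t \<noteq> 0" "D \<noteq> 0"
  shows "t * ((Q*Y*(1/t)*(1/t) - (1 - 1/t)*(W*(1/t) + 1)) * (t/D)) = (Q*Y - (t-1)*W - t*(t-1))/D"
  using assms by (simp add: field_simps)
lemma hY21: fixes t K X Q A B D :: real assumes "t \<noteq> 0" "D \<noteq> 0"
  shows "t * ((Q*(A - B)*(1/t) - (1 - 1/t)*K*X*(1/t)) * (t/D)) = (Q*(t*A - t*B) - (t-1)*(X*K))/D"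
  using assms by (simp add: field_simps)

lemma solveY:
  fixes a b q y11 y12 y21 y22 :: real and n :: nat
  assumes a: "a > -1" and b: "b > -1" and q: "q > 0" "q < a + 1" and n: "n \<ge> 2"
  defines "t \<equiv> real n" and "x11 \<equiv> XAf a b q n" and "x12 \<equiv> XBf a q n" and "x21 \<equiv> XCf a b q n" and "x22 \<equiv> XDf a b q n"
  assumes f12: "y12 * gg2 a b (t-2) + (t-1)*(-2*x11 + x12*(b-a-2)) = gg1 a b q t * y12"
    and f11: "y11 * gg1 a b q (t-2) + y12*q + (t-1)*(x11*(b-a+1)) + t*(t-1) = gg1 a b q t * y11"
    and f22: "y22 * gg2 a b (t-2) + (t-1)*(-2*x21 + x22*(b-a-2)) + t*(t-1) = q*y12 + gg2 a b t * y22"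
    and f21: "y21 * gg1 a b q (t-2) + y22*q + (t-1)*(x21*(b-a+1)) = q*y11 + gg2 a b t * y21"
  shows "y12 = Y12f a b q n" "y11 = t * Y11b a b q n" "y22 = t * Y22b a b q n" "y21 = t * Y21b a b q n"
proof -
  have t: "t \<ge> 2" using n unfolding t_def by simp
  have t0: "t \<noteq> 0" using t by simp
  have l12: "y12 * (3*t + (2*a+b+1-q)) = -((t-1)*(-2*x11 + (b-a-2)*x12))"
    using f12 unfolding gg1_def gg2_def by (simp add: algebra_simps)
  have d1: "3*t + (2*a+b+1-q) > 0" using t a b q by simp
  have s12: "y12 = -((t-1)*(-2*x11 + (b-a-2)*x12)) / (3*t + (2*a+b+1-q))" using l12 d1 by (simp add: field_simps)
  have il1: "il 3 (2*a+b+1-q) n = t / (3*t + (2*a+b+1-q))" using il_eq[of n 3 "2*a+b+1-q"] t d1 unfolding t_def by simp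
  show y12: "y12 = Y12f a b q n" unfolding Y12f_def il1 s12 x11_def[symmetric] x12_def[symmetric] t_def[symmetric]
    by (rule sym, rule hY12[OF t0]) (use d1 in simp)
  have l11: "y11 * (4*t + 2*(a+b)) = -(q*y12 + (t-1)*(x11*(b-a+1)) + t*(t-1))"
    using f11 unfolding gg1_def by (simp add: algebra_simps)
  have d2: "4*t + 2*(a+b) > 0" using t a b by simp
  have s11: "y11 = -(q*y12 + (t-1)*(x11*(b-a+1)) + t*(t-1)) / (4*t + 2*(a+b))" using l11 d2 by (simp add: field_simps)
  have il2: "il 4 (2*(a+b)) n = t / (4*t + 2*(a+b))" using il_eq[of n 4 "2*(a+b)"] t d2 unfolding t_def by simp
  show y11: "y11 = t * Y11b a b q n" unfolding Y11b_def il2 y12[symmetric] x11_def[symmetric] t_def[symmetric]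
    using hY11[OF t0, of "4*t + 2*(a+b)" "b-a+1" x11 q y12] d2 s11 by simp
  have l22: "y22 * (4*t + (2*(a+b)+2)) = q*y12 - (t-1)*(-2*x21 + (b-a-2)*x22) - t*(t-1)"
    using f22 unfolding gg2_def by (simp add: algebra_simps)
  have d3: "4*t + (2*(a+b)+2) > 0" using t a b by simp
  have s22: "y22 = (q*y12 - (t-1)*(-2*x21 + (b-a-2)*x22) - t*(t-1)) / (4*t + (2*(a+b)+2))" using l22 d3 by (simp add: field_simps)
  have il3: "il 4 (2*(a+b)+2) n = t / (4*t + (2*(a+b)+2))" using il_eq[of n 4 "2*(a+b)+2"] t d3 unfolding t_def by simp
  show y22: "y22 = t * Y22b a b q n" unfolding Y22b_def il3 y12[symmetric] x21_def[symmetric] x22_def[symmetric] t_def[symmetric]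
    using hY22[OF t0, of "4*t + (2*(a+b)+2)" q y12 "-2*x21 + (b-a-2)*x22"] d3 s22 by simp
  have l21: "y21 * (5*t + (2*(a+b)+b+1+q)) = q*y11 - q*y22 - (t-1)*(x21*(b-a+1))"
    using f21 unfolding gg1_def gg2_def by (simp add: algebra_simps)
  have d4: "5*t + (2*(a+b)+b+1+q) > 0" using t a b q by simp
  have s21: "y21 = (q*y11 - q*y22 - (t-1)*(x21*(b-a+1))) / (5*t + (2*(a+b)+b+1+q))" using l21 d4 by (simp add: field_simps)
  have il4: "il 5 (2*(a+b)+b+1+q) n = t / (5*t + (2*(a+b)+b+1+q))" using il_eq[of n 5 "2*(a+b)+b+1+q"] t d4 unfolding t_def by simp
  show "y21 = t * Y21b a b q n" unfolding Y21b_def il4 x21_def[symmetric] t_def[symmetric]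
    using hY21[OF t0, of "5*t + (2*(a+b)+b+1+q)" q "Y11b a b q n" "Y22b a b q n" "b-a+1" x21] d4 s21 y11 y22
    by (simp add: right_diff_distrib mult.assoc)
qed

lemma ev_all: "(\<And>n. f n = g n) \<Longrightarrow> eventually (\<lambda>n. f n = g n) sequentially"
  by simp

lemma E_XB: "\<exists>c2. E3 (XBf a q) 2 (-2*(a+1-q)) c2"
  by (rule exI, rule E3_conv[OF E3_cmult[OF E3_il[of 1 "a+1-q"]], of 2])
     (simp_all add: XBf_def il_def)

lemma E_XA:
  assumes xb: "E3 (XBf a q) 2 (-2*(a+1-q)) xb2"
  shows "\<exists>c2. E3 (XAf a b q) (-(b-a+1)/2) (((b+1)^2 - a^2)/4 - q) c2"
  by (rule exI, rule E3_conv[OF E3_mult[OF E3_neg[OF E3_add[OF E3_const[of "b-a+1"] E3_mult[OF E3_cmult[OF xb, of q] E3_u]]] E3_il[of 2 "a+b+1"]]])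
     (simp_all add: XAf_def il_def field_simps power2_eq_square)

lemma E_XD:
  assumes xb: "E3 (XBf a q) 2 (-2*(a+1-q)) xb2"
  shows "\<exists>c2. E3 (XDf a b q) (-(b-a-2)/2) ((b^2 - (a+2)^2)/4 + q) c2"
  by (rule exI, rule E3_conv[OF E3_mult[OF E3_diff[OF E3_mult[OF E3_cmult[OF xb, of q] E3_u] E3_const[of "b-a-2"]] E3_il[of 2 "a+b+2"]]])
     (simp_all add: XDf_def il_def field_simps power2_eq_square)

lemma E_XC:
  assumes xa: "E3 (XAf a b q) (-(b-a+1)/2) xa1 xa2" and xd: "E3 (XDf a b q) (-(b-a-2)/2) xd1 xd2"
  shows "\<exists>c2. E3 (XCf a b q) 0 (-q/2) c2"
  by (rule exI, rule E3_conv[OF E3_mult[OF E3_mult[OF E3_cmult[OF E3_diff[OF xa xd], of q] E3_u] E3_il[of 3 "a+2*b+2+q"]]])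
     (simp_all add: XCf_def il_def field_simps)

definition Y12b :: "real \<Rightarrow> real \<Rightarrow> real \<Rightarrow> nat \<Rightarrow> real" where
  "Y12b a b q n = Y12f a b q n * (1 / real n)"

lemma E_Y12:
  assumes xa: "E3 (XAf a b q) xa0 xa1 xa2" and xb: "E3 (XBf a q) xb0 xb1 xb2"
  shows "\<exists>c0 c1 c2. E3 (Y12f a b q) c0 c1 c2"
  by (rule exI, rule exI, rule exI, rule E3_conv[OF E3_mult[OF E3_neg[OF E3_mult[OF E3_diff[OF E3_const[of 1] E3_u]
        E3_add[OF E3_cmult[OF xa, of "-2"] E3_cmult[OF xb, of "b-a-2"]]]] E3_il[of 3 "2*a+b+1-q"]]]; (rule refl | simp add: Y12f_def il_def))

lemma E_Y12b:
  assumes y12: "E3 (Y12f a b q) y0 y1 y2"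
  shows "\<exists>c1 c2. E3 (Y12b a b q) 0 c1 c2"
  by (rule exI, rule exI, rule E3_conv[OF E3_mult[OF y12 E3_u]]) (simp_all add: Y12b_def)

lemma E_Y11:
  assumes xa: "E3 (XAf a b q) xa0 xa1 xa2" and y12: "E3 (Y12f a b q) y0 y1 y2"
  shows "\<exists>c1 c2. E3 (Y11b a b q) (-1/4) c1 c2"
  by (rule exI, rule exI, rule E3_conv[OF E3_mult[OF E3_neg[OF E3_add[OF E3_mult[OF E3_diff[OF E3_const[of 1] E3_u]
        E3_add[OF E3_mult[OF E3_cmult[OF xa, of "b-a+1"] E3_u] E3_const[of 1]]]
        E3_mult[OF E3_mult[OF E3_cmult[OF y12, of q] E3_u] E3_u]]] E3_il[of 4 "2*(a+b)"]]]; (rule refl | simp add: Y11b_def il_def))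

lemma E_Y22:
  assumes xc: "E3 (XCf a b q) xc0 xc1 xc2" and xd: "E3 (XDf a b q) xd0 xd1 xd2" and y12: "E3 (Y12f a b q) y0 y1 y2"
  shows "\<exists>c1 c2. E3 (Y22b a b q) (-1/4) c1 c2"
  by (rule exI, rule exI, rule E3_conv[OF E3_mult[OF E3_diff[OF E3_mult[OF E3_mult[OF E3_cmult[OF y12, of q] E3_u] E3_u]
        E3_mult[OF E3_diff[OF E3_const[of 1] E3_u] E3_add[OF E3_mult[OF E3_add[OF E3_cmult[OF xc, of "-2"] E3_cmult[OF xd, of "b-a-2"]] E3_u] E3_const[of 1]]]]
        E3_il[of 4 "2*(a+b)+2"]]]; (rule refl | simp add: Y22b_def il_def))

lemma E_Y21:
  assumes y11: "E3 (Y11b a b q) u0 u1 u2" and y22: "E3 (Y22b a b q) v0 v1 v2" and xc: "E3 (XCf a b q) xc0 xc1 xc2"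
  shows "\<exists>c1 c2. E3 (Y21b a b q) 0 c1 c2"
  by (rule exI, rule exI, rule E3_conv[OF E3_mult[OF E3_diff[OF E3_mult[OF E3_cmult[OF E3_diff[OF y11 y22], of q] E3_u]
        E3_mult[OF E3_mult[OF E3_mult[OF E3_diff[OF E3_const[of 1] E3_u] E3_const[of "b-a+1"]] xc] E3_u]]
        E3_il[of 5 "2*(a+b)+b+1+q"]]]; (rule refl | simp add: Y21b_def il_def))

lemma mpeval_add: "mpeval (A + B) x = mpeval A x + mpeval B x"
  by (simp add: mpeval_def vec_eq_iff)
lemma mpeval_cmat: "mpeval (cmat A) x = A"
  by (simp add: mpeval_def cmat_def vec_eq_iff)
lemma mpeval_inj: assumes "\<And>x. mpeval A x = mpeval B x" shows "A = B"
proof -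
  have "poly (A$i$j) = poly (B$i$j)" for i j
  proof
    fix x show "poly (A$i$j) x = poly (B$i$j) x" using assms[of x] by (simp add: mpeval_def vec_eq_iff)
  qed
  then show ?thesis by (simp add: vec_eq_iff poly_eq_poly_eq_iff)
qed

lemma recur:
  assumes hyp: "\<And>x. x *\<^sub>R mpeval (P n) x = mpeval (P (Suc n)) x + Bn ** mpeval (P n) x
                 + Cn ** (if n = 0 then 0 else mpeval (P (n - 1)) x)"
    and mon: "\<And>k. monic_mpoly k (P k)" and n: "n \<ge> 1"
  shows "cm (P n) (n-1) = cm (P (Suc n)) n + Bn"
    and "n \<ge> 2 \<Longrightarrow> cm (P n) (n-2) = cm (P (Suc n)) (n-1) + Bn ** cm (P n) (n-1) + Cn"
proof -
  define XP where "XP = (\<chi> i j. [:0,1:] * P n $ i $ j)"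
  have xp: "mpeval XP x = x *\<^sub>R mpeval (P n) x" for x
    by (simp add: XP_def mpeval_def vec_eq_iff)
  have "mpeval XP x = mpeval (P (Suc n) + cmat Bn ** P n + cmat Cn ** P (n-1)) x" for x
    unfolding xp hyp mpeval_add mpeval_mult mpeval_cmat using n by simp
  then have eq: "XP = P (Suc n) + cmat Bn ** P n + cmat Cn ** P (n-1)" by (rule mpeval_inj)
  have cxp: "cm XP (Suc m) = cm (P n) m" for m
    by (simp add: XP_def cm_def vec_eq_iff)
  have c0: "cm (P (n-1)) n = 0"
    using lowdeg_monic[OF mon[of "n-1"]] n unfolding lowdeg_cm by simp
  have "cm XP n = cm (P (Suc n)) n + Bn ** cm (P n) n + Cn ** cm (P (n-1)) n"
    unfolding eq cm_add cm_cmat_mult ..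
  moreover have "cm XP n = cm (P n) (n-1)" using cxp[of "n-1"] n by simp
  ultimately show "cm (P n) (n-1) = cm (P (Suc n)) n + Bn"
    using c0 cm_monic[OF mon[of n]] by simp
  assume n2: "n \<ge> 2"
  have "cm XP (n-1) = cm (P (Suc n)) (n-1) + Bn ** cm (P n) (n-1) + Cn ** cm (P (n-1)) (n-1)"
    unfolding eq cm_add cm_cmat_mult ..
  moreover have "cm XP (n-1) = cm (P n) (n-2)"
  proof -
    have "Suc (n-2) = n-1" using n2 by arith
    then show ?thesis using cxp[of "n-2"] by simp
  qed
  ultimately show "cm (P n) (n-2) = cm (P (Suc n)) (n-1) + Bn ** cm (P n) (n-1) + Cn"
    using cm_monic[OF mon[of "n-1"]] by simp
qed

lemma norm22_le: "norm (M :: real^2^2) \<le> \<bar>M$1$1\<bar> + \<bar>M$1$2\<bar> + \<bar>M$2$1\<bar> + \<bar>M$2$2\<bar>"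
proof -
  have "norm M \<le> (\<Sum>i\<in>UNIV. norm (M$i))" unfolding norm_vec_def by (rule L2_set_le_sum) simp
  also have "\<dots> = norm (M$1) + norm (M$2)" by (simp add: sum_2)
  also have "\<dots> \<le> (\<bar>M$1$1\<bar> + \<bar>M$1$2\<bar>) + (\<bar>M$2$1\<bar> + \<bar>M$2$2\<bar>)"
    using norm_le_l1_cart[of "M$1"] norm_le_l1_cart[of "M$2"] by (simp add: sum_2)
  finally show ?thesis by simp
qed

lemma norm22_bigo:
  assumes "\<And>i j. (\<lambda>n. M n $ i $ j) \<in> O(g)"
  shows "(\<lambda>n. norm (M n :: real^2^2)) \<in> O(g)"
proof -
  have a: "(\<lambda>n. \<bar>M n $ i $ j\<bar>) \<in> O(g)" for i j using assms[of i j] by simp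
  have s: "(\<lambda>n. \<bar>M n$1$1\<bar> + \<bar>M n$1$2\<bar> + \<bar>M n$2$1\<bar> + \<bar>M n$2$2\<bar>) \<in> O(g)"
    by (rule sum_in_bigo(1)[OF sum_in_bigo(1)[OF sum_in_bigo(1)[OF a a] a] a])
  have "(\<lambda>n. norm (M n)) \<in> O(\<lambda>n. \<bar>M n$1$1\<bar> + \<bar>M n$1$2\<bar> + \<bar>M n$2$1\<bar> + \<bar>M n$2$2\<bar>)"
    by (rule landau_o.big_mono) (simp add: norm22_le)
  then show ?thesis using s by (rule landau_o.big_trans)
qed

lemma entry_B:
  assumes E: "E3 F c0 c1 c2" and ev: "eventually (\<lambda>n. g n = F n - F (Suc n) - c1 / real n ^ 2) sequentially"
  shows "g \<in> O(\<lambda>n. 1 / real n ^ 3)"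
proof -
  from landau_o.big.in_cong[OF ev] show ?thesis using E3_diff_shift[OF E] by (rule iffD2)
qed

lemma entry_C:
  assumes E: "E3 F c0 c1 c2" and ev: "eventually (\<lambda>n. g n = real n * F n - real (Suc n) * F (Suc n) + c0 - h n) sequentially"
    and h: "h \<in> O(\<lambda>n. 1 / real n ^ 2)"
  shows "g \<in> O(\<lambda>n. 1 / real n ^ 2)"
proof -
  have X: "(\<lambda>n. real n * F n - real (Suc n) * F (Suc n) + c0 - h n) \<in> O(\<lambda>n. 1 / real n ^ 2)"
    by (rule sum_in_bigo(2)[OF E3_lin_shift[OF E] h])
  from landau_o.big.in_cong[OF ev] show ?thesis using X by (rule iffD2)
qed

lemma bigo_B2:
  assumes "g \<in> O(\<lambda>n. 1 / real n ^ 3)" shows "(\<lambda>n. g n + c / real n ^ 2) \<in> O(\<lambda>n. 1 / real n ^ 2)"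
proof -
  have a: "g \<in> O(\<lambda>n. 1 / real n ^ 2)" using landau_o.big_trans[OF assms bigo_c_pow[of 2 3 1]] by simp
  have b: "(\<lambda>n. c / real n ^ 2) \<in> O(\<lambda>n. 1 / real n ^ 2)" using bigo_c_pow[of 2 2 c] by simp
  show ?thesis by (rule sum_in_bigo(1)[OF a b])
qed

lemma norm22_bigo4:
  assumes "(\<lambda>n. M n $ 1 $ 1) \<in> O(g)" "(\<lambda>n. M n $ 1 $ 2) \<in> O(g)" "(\<lambda>n. M n $ 2 $ 1) \<in> O(g)" "(\<lambda>n. M n $ 2 $ 2) \<in> O(g)"
  shows "(\<lambda>n. norm (M n :: real^2^2)) \<in> O(g)"
proof (rule norm22_bigo)
  fix i j :: 2
  show "(\<lambda>n. M n $ i $ j) \<in> O(g)"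
    using assms exhaust_2[of i] exhaust_2[of j] by auto
qed

lemma bigo_ev_cong: "f \<in> O(h) \<Longrightarrow> eventually (\<lambda>n. f n = g n) sequentially \<Longrightarrow> g \<in> O(h)"
  using landau_o.big.in_cong by blast

theorem corollary2p4:
  fixes \<alpha> \<beta> p :: real and P :: "nat \<Rightarrow> real poly ^2^2" and B C :: "nat \<Rightarrow> real^2^2"
  assumes "\<alpha> > -1" "\<beta> > -1" "p > 0"
    and "is_monic_MOPS (weightW \<alpha> \<beta> p) P"
    and "\<And>n x. x *\<^sub>R mpeval (P n) x = mpeval (P (Suc n)) x + B n ** mpeval (P n) x
                 + C n ** (if n = 0 then 0 else mpeval (P (n - 1)) x)"
  shows "(\<lambda>n. norm (B n - (1 / real n ^ 2) *\<^sub>R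
            ((1/4) *\<^sub>R vector [vector [(\<beta>+1)^2 - \<alpha>^2, 0], vector [0, \<beta>^2 - (\<alpha>+2)^2]]
             - ((\<alpha>+1)/(1+p)) *\<^sub>R vector [vector [1, 2*p], vector [1/2, -1]])))
           \<in> O(\<lambda>n. 1 / real n ^ 3) \<and>
         (\<lambda>n. norm (C n - (1/4) *\<^sub>R mat 1)) \<in> O(\<lambda>n. 1 / real n ^ 2)"
proof -
  define K :: "real^2^2" where "K = (1/4) *\<^sub>R vector [vector [(\<beta>+1)^2 - \<alpha>^2, 0], vector [0, \<beta>^2 - (\<alpha>+2)^2]]
             - ((\<alpha>+1)/(1+p)) *\<^sub>R vector [vector [1, 2*p], vector [1/2, -1]]"
  define q where "q = (\<alpha>+1)/(p+1)"
  have pp: "p + 1 > 0" using assms(3) by simp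
  have aq: "\<alpha> = q*(p+1) - 1" unfolding q_def using pp by (simp add: field_simps)
  have q0: "q > 0" unfolding q_def using assms(1) pp by simp
  have q1: "q < \<alpha> + 1"
  proof -
    have "(\<alpha>+1)*p > 0" using assms(1,3) by simp
    then show ?thesis unfolding q_def using pp by (simp add: field_simps algebra_simps)
  qed
  have mon: "\<And>k. monic_mpoly k (P k)" using assms(4) unfolding is_monic_MOPS_def by blast
  have eig: "\<And>n. Dop \<alpha> \<beta> q (P n) = cmat (Gam \<alpha> \<beta> q n) ** P n"
    by (rule eigen[OF assms(4) aq assms(1,2,3)])
  define X where "X n = cm (P n) (n-1)" for n
  define Y where "Y n = cm (P n) (n-2)" for n
  have Xf: "X n $1$2 = XBf \<alpha> q n \<and> X n $1$1 = XAf \<alpha> \<beta> q n \<and> X n $2$2 = XDf \<alpha> \<beta> q n \<and> X n $2$1 = XCf \<alpha> \<beta> q n"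
    if n: "n \<ge> 1" for n
  proof -
    note e = Xeqs[OF eig mon n]
    show ?thesis unfolding X_def using solveX[OF assms(1,2) q0 q1 n e] by simp
  qed
  have Yf: "Y n $1$2 = Y12f \<alpha> \<beta> q n \<and> Y n $1$1 = real n * Y11b \<alpha> \<beta> q n
      \<and> Y n $2$2 = real n * Y22b \<alpha> \<beta> q n \<and> Y n $2$1 = real n * Y21b \<alpha> \<beta> q n"
    if n: "n \<ge> 2" for n
  proof -
    have n1: "n \<ge> 1" using n by simp
    have xs: "cm (P n) (n-1) $1$2 = XBf \<alpha> q n" "cm (P n) (n-1) $1$1 = XAf \<alpha> \<beta> q n"
       "cm (P n) (n-1) $2$2 = XDf \<alpha> \<beta> q n" "cm (P n) (n-1) $2$1 = XCf \<alpha> \<beta> q n"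
      using Xf[OF n1] unfolding X_def by simp_all
    note e = Yeqs[OF eig mon n, unfolded xs]
    show ?thesis unfolding Y_def using solveY[OF assms(1,2) q0 q1 n e] by simp
  qed
  have Brec: "B n = X n - X (Suc n)" if n: "n \<ge> 1" for n
    using recur(1)[OF assms(5)[where n = n] mon n] unfolding X_def by simp
  have Crec: "C n = Y n - Y (Suc n) - B n ** X n" if n: "n \<ge> 2" for n
  proof -
    have n1: "n \<ge> 1" using n by simp
    have s: "Suc n - 2 = n - 1" using n by simp
    show ?thesis using recur(2)[OF assms(5)[where n = n] mon n1 n] unfolding X_def Y_def s by simp
  qed
  obtain xb2 where xbE: "E3 (XBf \<alpha> q) 2 (-2*(\<alpha>+1-q)) xb2" using E_XB by blast
  obtain xa2 where xaE: "E3 (XAf \<alpha> \<beta> q) (-(\<beta>-\<alpha>+1)/2) (((\<beta>+1)^2 - \<alpha>^2)/4 - q) xa2" using E_XA[OF xbE] by blast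
  obtain xd2 where xdE: "E3 (XDf \<alpha> \<beta> q) (-(\<beta>-\<alpha>-2)/2) ((\<beta>^2 - (\<alpha>+2)^2)/4 + q) xd2" using E_XD[OF xbE] by blast
  obtain xc2 where xcE: "E3 (XCf \<alpha> \<beta> q) 0 (-q/2) xc2" using E_XC[OF xaE xdE] by blast
  obtain y0 y1 y2 where y12E: "E3 (Y12f \<alpha> \<beta> q) y0 y1 y2" using E_Y12[OF xaE xbE] by blast
  obtain z1 z2 where y12bE: "E3 (Y12b \<alpha> \<beta> q) 0 z1 z2" using E_Y12b[OF y12E] by blast
  obtain u1 u2 where y11E: "E3 (Y11b \<alpha> \<beta> q) (-1/4) u1 u2" using E_Y11[OF xaE y12E] by blast
  obtain v1 v2 where y22E: "E3 (Y22b \<alpha> \<beta> q) (-1/4) v1 v2" using E_Y22[OF xcE xdE y12E] by blast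
  obtain w1 w2 where y21E: "E3 (Y21b \<alpha> \<beta> q) 0 w1 w2" using E_Y21[OF y11E y22E xcE] by blast
  have Ke: "K$1$1 = ((\<beta>+1)^2 - \<alpha>^2)/4 - q" "K$1$2 = -2*(\<alpha>+1-q)" "K$2$1 = -q/2" "K$2$2 = (\<beta>^2 - (\<alpha>+2)^2)/4 + q"
    unfolding K_def q_def using pp by (simp_all add: field_simps)
  have ev1: "eventually (\<lambda>n. n \<ge> 1) sequentially" by (rule eventually_ge_at_top)
  have ev2: "eventually (\<lambda>n. n \<ge> 2) sequentially" by (rule eventually_ge_at_top)
  define D where "D n = B n - (1 / real n ^ 2) *\<^sub>R K" for n
  have D11: "(\<lambda>n. D n $1$1) \<in> O(\<lambda>n. 1 / real n ^ 3)"
    by (rule entry_B[OF xaE], rule eventually_mono[OF ev1]) (simp add: D_def Brec Xf Ke)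
  have D12: "(\<lambda>n. D n $1$2) \<in> O(\<lambda>n. 1 / real n ^ 3)"
    by (rule entry_B[OF xbE], rule eventually_mono[OF ev1]) (simp add: D_def Brec Xf Ke)
  have D21: "(\<lambda>n. D n $2$1) \<in> O(\<lambda>n. 1 / real n ^ 3)"
    by (rule entry_B[OF xcE], rule eventually_mono[OF ev1]) (simp add: D_def Brec Xf Ke)
  have D22: "(\<lambda>n. D n $2$2) \<in> O(\<lambda>n. 1 / real n ^ 3)"
    by (rule entry_B[OF xdE], rule eventually_mono[OF ev1]) (simp add: D_def Brec Xf Ke)
  have part1: "(\<lambda>n. norm (D n)) \<in> O(\<lambda>n. 1 / real n ^ 3)"
    by (rule norm22_bigo4[OF D11 D12 D21 D22])
  have Bb: "(\<lambda>n. B n $ i $ k) \<in> O(\<lambda>n. 1 / real n ^ 2)" for i k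
  proof -
    have Dik: "(\<lambda>n. D n $ i $ k) \<in> O(\<lambda>n. 1 / real n ^ 3)"
      using D11 D12 D21 D22 exhaust_2[of i] exhaust_2[of k] by auto
    have "(\<lambda>n. D n $ i $ k + K $ i $ k / real n ^ 2) \<in> O(\<lambda>n. 1 / real n ^ 2)" by (rule bigo_B2[OF Dik])
    then show ?thesis by (rule bigo_ev_cong) (simp add: D_def)
  qed
  have Xb: "(\<lambda>n. X n $ k $ j) \<in> O(\<lambda>n. 1)" for k j
  proof -
    have "(\<lambda>n. X n $1$1) \<in> O(\<lambda>n. 1)"
      by (rule bigo_ev_cong[OF E3_bounded[OF xaE]], rule eventually_mono[OF ev1]) (simp add: Xf)
    moreover have "(\<lambda>n. X n $1$2) \<in> O(\<lambda>n. 1)"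
      by (rule bigo_ev_cong[OF E3_bounded[OF xbE]], rule eventually_mono[OF ev1]) (simp add: Xf)
    moreover have "(\<lambda>n. X n $2$1) \<in> O(\<lambda>n. 1)"
      by (rule bigo_ev_cong[OF E3_bounded[OF xcE]], rule eventually_mono[OF ev1]) (simp add: Xf)
    moreover have "(\<lambda>n. X n $2$2) \<in> O(\<lambda>n. 1)"
      by (rule bigo_ev_cong[OF E3_bounded[OF xdE]], rule eventually_mono[OF ev1]) (simp add: Xf)
    ultimately show ?thesis using exhaust_2[of k] exhaust_2[of j] by auto
  qed
  have BX: "(\<lambda>n. (B n ** X n) $ i $ j) \<in> O(\<lambda>n. 1 / real n ^ 2)" for i j
  proof -
    have t1: "(\<lambda>n. B n $ i $ 1 * X n $ 1 $ j) \<in> O(\<lambda>n. 1 / real n ^ 2)"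
      using landau_o.big.mult[OF Bb Xb] by simp
    have t2: "(\<lambda>n. B n $ i $ 2 * X n $ 2 $ j) \<in> O(\<lambda>n. 1 / real n ^ 2)"
      using landau_o.big.mult[OF Bb Xb] by simp
    show ?thesis using sum_in_bigo(1)[OF t1 t2] by (simp add: matrix_matrix_mult_def sum_2)
  qed
  define G where "G n = C n - (1/4) *\<^sub>R mat 1" for n
  have G11: "(\<lambda>n. G n $1$1) \<in> O(\<lambda>n. 1 / real n ^ 2)"
    by (rule entry_C[OF y11E _ BX[of 1 1]], rule eventually_mono[OF ev2]) (simp add: G_def Crec Yf mat_def)
  have G12: "(\<lambda>n. G n $1$2) \<in> O(\<lambda>n. 1 / real n ^ 2)"
    by (rule entry_C[OF y12bE _ BX[of 1 2]], rule eventually_mono[OF ev2]) (simp add: G_def Crec Yf mat_def Y12b_def)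
  have G21: "(\<lambda>n. G n $2$1) \<in> O(\<lambda>n. 1 / real n ^ 2)"
    by (rule entry_C[OF y21E _ BX[of 2 1]], rule eventually_mono[OF ev2]) (simp add: G_def Crec Yf mat_def)
  have G22: "(\<lambda>n. G n $2$2) \<in> O(\<lambda>n. 1 / real n ^ 2)"
    by (rule entry_C[OF y22E _ BX[of 2 2]], rule eventually_mono[OF ev2]) (simp add: G_def Crec Yf mat_def)
  have part2: "(\<lambda>n. norm (G n)) \<in> O(\<lambda>n. 1 / real n ^ 2)"
    by (rule norm22_bigo4[OF G11 G12 G21 G22])
  show ?thesis using part1 part2 unfolding D_def G_def K_def by simp
qed

end
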